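(* Let $C\in\mathcal{C}_n$ be an $n$-qubit Clifford unitary with $$C Z_i C^\dagger = (-1)^{f_i} P^{\vec a_i,\vec b_i},\qquad C X_i C^\dagger = (-1)^{h_i} P^{\vec c_i,\vec d_i}\qquad(i=1,\dots,n),$$ where $\vec a_i,\vec b_i,\vec c_i,\vec d_i\in\{0,1\}^n$ and $f_i,h_i\in\{0,1\}$. Define $\vec\alpha,\vec\beta\in\{0,1\}^n$ by $\alpha_i=\vec c_i\cdot\vec d_i \bmod 2$ and $\beta_i=\vec a_i\cdot\vec b_i \bmod 2$. Then $$C^* = e^{i\theta}\, C\, P^{\vec\alpha,\vec\beta}$$ for some phase $\theta\in\mathbb{R}$, where $C^*$ denotes entrywise complex conjugation in the computational basis.
   Context: Single-qubit Paulis: $X=\begin{pmatrix}0&1\\1&0\end{pmatrix}$, $Y=\begin{pmatrix}0&-i\\i&0\end{pmatrix}$, $Z=\begin{pmatrix}1&0\\0&-1\end{pmatrix}$; $X_j,Z_j$ act on qubit $j$. Labeling: $P^{00}=I$, $P^{01}=X$, $P^{10}=Z$, $P^{11}=Y$, and $P^{\vec a,\vec b}=P^{a_1b_1}\otimes\cdots\otimes P^{a_nb_n}$ for $\vec a,\vec b\in\{0,1\}^n$. The Pauli group $\mathcal{P}_n$ consists of the $i^kP^{\vec a,\vec b}$, and $\mathcal{C}_n=\{U\in U(2^n): U\mathcal{P}_nU^\dagger\subseteq\mathcal{P}_n\}$. *)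

theory Defs
  imports Complex_Main "Jordan_Normal_Form.Matrix"
begin

text \<open>Single-qubit Paulis, labelled P^{00}=I, P^{01}=X, P^{10}=Z, P^{11}=Y.\<close>
definition pauli1 :: "bool \<Rightarrow> bool \<Rightarrow> complex mat" where
  "pauli1 a b =
     (if \<not> a \<and> \<not> b then mat_of_rows_list 2 [[1, 0], [0, 1]]
      else if \<not> a \<and> b then mat_of_rows_list 2 [[0, 1], [1, 0]]
      else if a \<and> \<not> b then mat_of_rows_list 2 [[1, 0], [0, -1]]
      else mat_of_rows_list 2 [[0, -\<i>], [\<i>, 0]])"

text \<open>Bit of computational-basis index r belonging to qubit j (0-indexed, j < n);
  qubit 0 is the leftmost tensor factor, i.e. the most significant bit.\<close>
definition qbit :: "nat \<Rightarrow> nat \<Rightarrow> nat \<Rightarrow> nat" where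
  "qbit n r j = (r div 2 ^ (n - 1 - j)) mod 2"

text \<open>P^{a,b} = P^{a_1 b_1} (x) ... (x) P^{a_n b_n}, written out entrywise
  (Kronecker product).  Vectors in {0,1}^n are functions nat => bool on indices < n.\<close>
definition pauli :: "nat \<Rightarrow> (nat \<Rightarrow> bool) \<Rightarrow> (nat \<Rightarrow> bool) \<Rightarrow> complex mat" where
  "pauli n a b = mat (2 ^ n) (2 ^ n)
     (\<lambda>(r, s). \<Prod>j<n. pauli1 (a j) (b j) $$ (qbit n r j, qbit n s j))"

definition pauli_group :: "nat \<Rightarrow> complex mat set" where
  "pauli_group n = {\<i> ^ k \<cdot>\<^sub>m pauli n a b | k a b. True}"

definition dagger :: "complex mat \<Rightarrow> complex mat" where
  "dagger A = mat (dim_col A) (dim_row A) (\<lambda>(i, j). cnj (A $$ (j, i)))"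

definition conj_mat :: "complex mat \<Rightarrow> complex mat" where
  "conj_mat A = map_mat cnj A"

definition unitary_mat :: "nat \<Rightarrow> complex mat \<Rightarrow> bool" where
  "unitary_mat N U \<longleftrightarrow> U \<in> carrier_mat N N \<and> U * dagger U = 1\<^sub>m N"

definition clifford :: "nat \<Rightarrow> complex mat \<Rightarrow> bool" where
  "clifford n U \<longleftrightarrow> unitary_mat (2 ^ n) U \<and>
     (\<forall>P \<in> pauli_group n. U * P * dagger U \<in> pauli_group n)"

definition Zq :: "nat \<Rightarrow> nat \<Rightarrow> complex mat" where
  "Zq n i = pauli n (\<lambda>j. j = i) (\<lambda>_. False)"

definition Xq :: "nat \<Rightarrow> nat \<Rightarrow> complex mat" where
  "Xq n i = pauli n (\<lambda>_. False) (\<lambda>j. j = i)"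

definition sgn_bit :: "bool \<Rightarrow> complex" where
  "sgn_bit f = (if f then -1 else 1)"

definition dot2 :: "nat \<Rightarrow> (nat \<Rightarrow> bool) \<Rightarrow> (nat \<Rightarrow> bool) \<Rightarrow> bool" where
  "dot2 n u v = odd (card {j. j < n \<and> u j \<and> v j})"

end

theory Submission
  imports Defs "Jordan_Normal_Form.Determinant"
begin


lemma qbit_bit: "qbit n r j = (if bit r (n - 1 - j) then 1 else 0)"
  unfolding qbit_def bit_iff_odd by (simp add: odd_iff_mod_2_eq_one)

lemma bit_ge_false: "(r::nat) < 2 ^ n \<Longrightarrow> n \<le> p \<Longrightarrow> \<not> bit r p"
proof -
  assume "r < 2^n" "n \<le> p"
  then have "r < 2^p" using power_increasing[of n p "2::nat"] by linarith
  then show ?thesis by (simp add: bit_iff_odd)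
qed

lemma qbit_eq_imp_eq:
  assumes "r < 2^n" "s < 2^n" "\<And>j. j < n \<Longrightarrow> qbit n r j = qbit n s j"
  shows "r = s"
proof (rule bit_eqI)
  fix p
  show "bit r p = bit s p"
  proof (cases "p < n")
    case True
    have "qbit n r (n - 1 - p) = qbit n s (n - 1 - p)" using assms(3) True by simp
    moreover have "n - 1 - (n - 1 - p) = p" using True by simp
    ultimately show ?thesis unfolding qbit_bit by (auto split: if_splits)
  next
    case False then show ?thesis using bit_ge_false assms(1,2) by simp
  qed
qed

definition fl :: "nat \<Rightarrow> nat \<Rightarrow> nat \<Rightarrow> nat" where
  "fl n j r = flip_bit (n - 1 - j) r"

lemma qbit_fl: assumes "j < n" "k < n"
  shows "qbit n (fl n j r) k = (if k = j then 1 - qbit n r k else qbit n r k)"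
proof -
  have "(n - 1 - j = n - 1 - k) = (k = j)" using assms by auto
  then show ?thesis unfolding qbit_bit fl_def by (simp add: bit_flip_bit_iff)
qed

lemma qbit_le1: "qbit n r j \<le> 1"
  unfolding qbit_def by simp

lemma fl_fl: "fl n j (fl n j r) = r"
  unfolding fl_def by (rule bit_eqI) (auto simp: bit_flip_bit_iff)

lemma fl_less: assumes "j < n" "r < 2^n" shows "fl n j r < 2^n"
proof -
  have "take_bit n (fl n j r) = fl n j r"
    unfolding fl_def using assms
  proof (intro bit_eqI)
    fix p
    have "bit r p \<Longrightarrow> p < n" using bit_ge_false[OF assms(2)] by (meson not_le)
    then show "bit (take_bit n (flip_bit (n - 1 - j) r)) p = bit (flip_bit (n - 1 - j) r) p"
      using assms(1) by (auto simp: bit_take_bit_iff bit_flip_bit_iff)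
  qed
  then show ?thesis by (metis take_bit_nat_less_exp)
qed

lemma fl_lt: assumes "qbit n r j = 1" shows "fl n j r < r"
proof -
  have "bit r (n - 1 - j)" using assms unfolding qbit_bit by (auto split: if_splits)
  then have "fl n j r = unset_bit (n - 1 - j) r" unfolding fl_def flip_bit_eq_if by simp
  moreover have "int (unset_bit (n - 1 - j) r) = int r - 2 ^ (n - 1 - j)"
    using \<open>bit r (n-1-j)\<close> by (simp add: of_nat_unset_bit_eq unset_bit_eq bit_of_nat_iff)
  then have "int (unset_bit (n - 1 - j) r) < int r" by simp
  ultimately show ?thesis by linarith
qed

lemma exists_bits_aux: "\<exists>s::nat. s < 2^m \<and> (\<forall>p<m. bit s p = w p)"
proof (induction m arbitrary: w)
  case 0 then show ?case by simp
next
  case (Suc m)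
  obtain s :: nat where s: "s < 2^m" "\<forall>p<m. bit s p = w (Suc p)" using Suc[of "\<lambda>p. w (Suc p)"] by blast
  define t where "t = of_bool (w 0) + 2 * s"
  have "t < 2^Suc m" unfolding t_def using s(1) by auto
  moreover have "\<forall>p<Suc m. bit t p = w p"
  proof (intro allI impI)
    fix p assume "p < Suc m"
    show "bit t p = w p"
    proof (cases p)
      case 0 then show ?thesis unfolding t_def by (simp add: bit_0)
    next
      case (Suc q) then show ?thesis unfolding t_def using s(2) \<open>p < Suc m\<close>
        by (simp add: bit_Suc)
    qed
  qed
  ultimately show ?case by blast
qed

lemma exists_bits: "\<exists>s. s < 2^n \<and> (\<forall>j<n. (qbit n s j = 1) = w j)"
proof -
  obtain s where s: "(s::nat) < 2^n" "\<forall>p<n. bit s p = w (n - 1 - p)"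
    using exists_bits_aux[of n "\<lambda>p. w (n - 1 - p)"] by blast
  have "\<forall>j<n. (qbit n s j = 1) = w j"
  proof (intro allI impI)
    fix j assume "j < n"
    then have "n - 1 - (n - 1 - j) = j" by simp
    moreover have "n - 1 - j < n" using \<open>j < n\<close> by simp
    ultimately have "bit s (n-1-j) = w j" using s(2) by metis
    then show "(qbit n s j = 1) = w j" unfolding qbit_bit by simp
  qed
  then show ?thesis using s(1) by blast
qed


definition ent :: "bool \<Rightarrow> bool \<Rightarrow> nat \<Rightarrow> nat \<Rightarrow> complex" where
  "ent a b x y = (if (y = 1) = ((x = 1) \<noteq> b) then
     (if a then (if b then (if x = 0 then -\<i> else \<i>) else (if x = 0 then 1 else -1)) else 1) else 0)"

lemma pauli1_ent: assumes "x \<le> 1" "y \<le> 1" shows "pauli1 a b $$ (x, y) = ent a b x y"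
proof -
  have "x = 0 \<or> x = 1" "y = 0 \<or> y = 1" using assms by auto
  then show ?thesis unfolding pauli1_def ent_def
    by (cases a; cases b; auto simp: mat_of_rows_list_def)
qed

lemma ent_nz: "x \<le> 1 \<Longrightarrow> y \<le> 1 \<Longrightarrow> (ent a b x y \<noteq> 0) = ((y = 1) = ((x = 1) \<noteq> b))"
  unfolding ent_def by auto

lemma ent_cnj: "cnj (ent a b x y) = (if a \<and> b then -1 else 1) * ent a b x y"
  unfolding ent_def by auto

lemma ent_rel: assumes "x \<le> 1" "y \<le> 1"
  shows "ent a b x (1 - y) = sgn_bit a * ent a b (1 - x) y"
proof -
  have "x = 0 \<or> x = 1" "y = 0 \<or> y = 1" using assms by auto
  then show ?thesis unfolding ent_def sgn_bit_def by (cases a; cases b; auto)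
qed

lemma ent_norm: "ent a b x y \<noteq> 0 \<Longrightarrow> cmod (ent a b x y) = 1"
  unfolding ent_def by (auto split: if_splits)

lemma pauli_carrier: "pauli n a b \<in> carrier_mat (2^n) (2^n)"
  unfolding pauli_def by simp

lemma pauli_index: assumes "r < 2^n" "s < 2^n"
  shows "pauli n a b $$ (r, s) = (\<Prod>j<n. ent (a j) (b j) (qbit n r j) (qbit n s j))"
  unfolding pauli_def using assms
  by (simp, intro prod.cong refl pauli1_ent qbit_le1)

definition bcond :: "nat \<Rightarrow> (nat \<Rightarrow> bool) \<Rightarrow> nat \<Rightarrow> nat \<Rightarrow> bool" where
  "bcond n b r s = (\<forall>j<n. (qbit n s j = 1) = ((qbit n r j = 1) \<noteq> b j))"

lemma pauli_nz: assumes "r < 2^n" "s < 2^n"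
  shows "(pauli n a b $$ (r, s) \<noteq> 0) = bcond n b r s"
  unfolding pauli_index[OF assms] bcond_def
  using ent_nz[OF qbit_le1 qbit_le1] by auto

lemma pauli_norm: assumes "r < 2^n" "s < 2^n" "pauli n a b $$ (r, s) \<noteq> 0"
  shows "cmod (pauli n a b $$ (r, s)) = 1"
  using assms(3) unfolding pauli_index[OF assms(1,2)]
  by (simp add: prod_norm[symmetric] prod_zero_iff ent_norm)

lemma pauli_cnj: assumes "r < 2^n" "s < 2^n"
  shows "cnj (pauli n a b $$ (r, s)) = sgn_bit (dot2 n a b) * pauli n a b $$ (r, s)"
proof -
  have "cnj (pauli n a b $$ (r, s)) = (\<Prod>j<n. (if a j \<and> b j then -1 else 1) * ent (a j) (b j) (qbit n r j) (qbit n s j))"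
    unfolding pauli_index[OF assms] by (simp add: ent_cnj)
  also have "\<dots> = (\<Prod>j<n. (if a j \<and> b j then -1 else 1)) * pauli n a b $$ (r, s)"
    unfolding pauli_index[OF assms] by (simp add: prod.distrib)
  also have "(\<Prod>j<n. (if a j \<and> b j then -1 else 1)) = ((-1::complex) ^ card {j. j < n \<and> a j \<and> b j})"
  proof -
    have "(\<Prod>j<n. (if a j \<and> b j then -1 else (1::complex))) = (\<Prod>j\<in>{j. j < n \<and> a j \<and> b j}. -1)"
      by (rule prod.mono_neutral_cong_right) auto
    then show ?thesis by simp
  qed
  also have "(-1::complex) ^ card {j. j < n \<and> a j \<and> b j} = sgn_bit (dot2 n a b)"
    unfolding sgn_bit_def dot2_def by simp
  finally show ?thesis .
qed

lemma pauli_rel: assumes "r < 2^n" "s < 2^n" "i < n"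
  shows "pauli n a b $$ (r, fl n i s) = sgn_bit (a i) * pauli n a b $$ (fl n i r, s)"
proof -
  have fr: "fl n i r < 2^n" "fl n i s < 2^n" using fl_less assms by auto
  have c1: "(\<Prod>j\<in>{..<n}-{i}. ent (a j) (b j) (qbit n r j) (qbit n (fl n i s) j)) =
     (\<Prod>j\<in>{..<n}-{i}. ent (a j) (b j) (qbit n r j) (qbit n s j))"
    by (rule prod.cong) (auto simp: qbit_fl assms(3))
  have c2: "(\<Prod>j\<in>{..<n}-{i}. ent (a j) (b j) (qbit n (fl n i r) j) (qbit n s j)) =
     (\<Prod>j\<in>{..<n}-{i}. ent (a j) (b j) (qbit n r j) (qbit n s j))"
    by (rule prod.cong) (auto simp: qbit_fl assms(3))
  have A: "pauli n a b $$ (r, fl n i s) = ent (a i) (b i) (qbit n r i) (1 - qbit n s i) *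
     (\<Prod>j\<in>{..<n} - {i}. ent (a j) (b j) (qbit n r j) (qbit n s j))"
    unfolding pauli_index[OF assms(1) fr(2)] using assms(3)
    using assms(3) c1 c2 by (simp add: prod.remove[of "{..<n}" i] qbit_fl)
  have B: "pauli n a b $$ (fl n i r, s) = ent (a i) (b i) (1 - qbit n r i) (qbit n s i) *
     (\<Prod>j\<in>{..<n} - {i}. ent (a j) (b j) (qbit n r j) (qbit n s j))"
    unfolding pauli_index[OF fr(1) assms(2)] using assms(3)
    using assms(3) c1 c2 by (simp add: prod.remove[of "{..<n}" i] qbit_fl)
  show ?thesis unfolding A B using ent_rel[OF qbit_le1 qbit_le1, of "a i" "b i" n r i n s i] by simp
qed


lemma mult_entry: assumes "A \<in> carrier_mat N N" "B \<in> carrier_mat N N" "r < N" "s < N"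
  shows "(A * B) $$ (r, s) = (\<Sum>k\<in>{0..<N}. A $$ (r, k) * B $$ (k, s))"
  using assms by (simp add: scalar_prod_def)

lemma qbit_neq: assumes "k < 2^n" "s < 2^n" "k \<noteq> s" obtains j where "j < n" "qbit n k j \<noteq> qbit n s j"
  using qbit_eq_imp_eq[OF assms(1,2)] assms(3) by blast

lemma Zq_entry: assumes "k < 2^n" "s < 2^n" "i < n"
  shows "Zq n i $$ (k, s) = (if k = s then (if qbit n s i = 1 then -1 else 1) else 0)"
proof (cases "k = s")
  case True
  have "Zq n i $$ (k, s) = ent True False (qbit n s i) (qbit n s i) *
      (\<Prod>j\<in>{..<n}-{i}. ent False False (qbit n s j) (qbit n s j))"
  proof -
    have "(\<Prod>x\<in>{..<n} - {i}. ent (x = i) False (qbit n s x) (qbit n s x)) =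
        (\<Prod>j\<in>{..<n} - {i}. ent False False (qbit n s j) (qbit n s j))"
      by (rule prod.cong) auto
    then show ?thesis
      unfolding Zq_def pauli_index[OF assms(1,2)] using True assms(3)
      by (simp add: prod.remove[of "{..<n}" i])
  qed
  also have "(\<Prod>j\<in>{..<n}-{i}. ent False False (qbit n s j) (qbit n s j)) = 1"
    by (rule prod.neutral) (simp add: ent_def)
  finally show ?thesis using True qbit_le1[of n s i] by (auto simp: ent_def)
next
  case False
  obtain j where j: "j < n" "qbit n k j \<noteq> qbit n s j" using qbit_neq[OF assms(1,2) False] by blast
  have "ent (j = i) False (qbit n k j) (qbit n s j) = 0"
    using j(2) qbit_le1[of n k j] qbit_le1[of n s j] by (auto simp: ent_def)
  then have "Zq n i $$ (k, s) = 0"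
    unfolding Zq_def pauli_index[OF assms(1,2)] using j(1) by (auto intro: prod_zero)
  then show ?thesis using False by simp
qed

lemma Xq_entry: assumes "k < 2^n" "s < 2^n" "i < n"
  shows "Xq n i $$ (k, s) = (if k = fl n i s then 1 else 0)"
proof (cases "k = fl n i s")
  case True
  have "Xq n i $$ (k, s) = (\<Prod>j<n. ent False (j = i) (qbit n k j) (qbit n s j))"
    unfolding Xq_def pauli_index[OF assms(1,2)] by simp
  also have "\<dots> = (\<Prod>j<n. 1)" unfolding True
  proof (rule prod.cong[OF refl])
    fix j assume "j \<in> {..<n}"
    then show "ent False (j = i) (qbit n (fl n i s) j) (qbit n s j) = 1"
      using qbit_fl[OF assms(3), of j s] qbit_le1[of n s j] by (auto simp: ent_def)
  qed
  finally show ?thesis using True by simp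
next
  case False
  have fs: "fl n i s < 2^n" using fl_less assms by auto
  obtain j where j: "j < n" "qbit n k j \<noteq> qbit n (fl n i s) j" using qbit_neq[OF assms(1) fs False] by blast
  have "ent False (j = i) (qbit n k j) (qbit n s j) = 0"
    using j(2) qbit_le1[of n k j] qbit_le1[of n s j] qbit_fl[OF assms(3) j(1), of s]
    by (auto simp: ent_def split: if_splits)
  then have "Xq n i $$ (k, s) = 0"
    unfolding Xq_def pauli_index[OF assms(1,2)] using j(1) by (auto intro: prod_zero)
  then show ?thesis using False by simp
qed

lemma Zq_carrier: "Zq n i \<in> carrier_mat (2^n) (2^n)" unfolding Zq_def by (rule pauli_carrier)
lemma Xq_carrier: "Xq n i \<in> carrier_mat (2^n) (2^n)" unfolding Xq_def by (rule pauli_carrier)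

definition zs :: "nat \<Rightarrow> nat \<Rightarrow> nat \<Rightarrow> complex" where
  "zs n i s = (if qbit n s i = 1 then -1 else 1)"

lemma MZ_entry: assumes "M \<in> carrier_mat (2^n) (2^n)" "r < 2^n" "s < 2^n" "i < n"
  shows "(M * Zq n i) $$ (r, s) = M $$ (r, s) * zs n i s"
proof -
  have "(M * Zq n i) $$ (r, s) = (\<Sum>k\<in>{0..<2^n}. M $$ (r, k) * (if k = s then zs n i s else 0))"
    unfolding mult_entry[OF assms(1) Zq_carrier assms(2,3)]
    by (rule sum.cong[OF refl]) (use assms in \<open>simp add: Zq_entry zs_def\<close>)
  also have "\<dots> = M $$ (r, s) * zs n i s" using assms(3)
    by (simp add: if_distrib[of "\<lambda>x. M $$ (r, _) * x"] cong: if_cong)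
  finally show ?thesis .
qed

lemma ZM_entry: assumes "M \<in> carrier_mat (2^n) (2^n)" "r < 2^n" "s < 2^n" "i < n"
  shows "(Zq n i * M) $$ (r, s) = zs n i r * M $$ (r, s)"
proof -
  have "(Zq n i * M) $$ (r, s) = (\<Sum>k\<in>{0..<2^n}. (if r = k then zs n i r else 0) * M $$ (k, s))"
    unfolding mult_entry[OF Zq_carrier assms(1) assms(2,3)]
    by (rule sum.cong[OF refl]) (use assms in \<open>simp add: Zq_entry zs_def\<close>)
  also have "\<dots> = zs n i r * M $$ (r, s)" using assms(2)
    by (simp add: if_distrib[of "\<lambda>x. x * M $$ (_, s)"] cong: if_cong)
  finally show ?thesis .
qed

lemma MX_entry: assumes "M \<in> carrier_mat (2^n) (2^n)" "r < 2^n" "s < 2^n" "i < n"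
  shows "(M * Xq n i) $$ (r, s) = M $$ (r, fl n i s)"
proof -
  have "(M * Xq n i) $$ (r, s) = (\<Sum>k\<in>{0..<2^n}. (if k = fl n i s then M $$ (r, k) else 0))"
    unfolding mult_entry[OF assms(1) Xq_carrier assms(2,3)]
    by (rule sum.cong[OF refl]) (use assms in \<open>simp add: Xq_entry\<close>)
  also have "\<dots> = M $$ (r, fl n i s)" using fl_less[OF assms(4,3)] by simp
  finally show ?thesis .
qed

lemma XM_entry: assumes "M \<in> carrier_mat (2^n) (2^n)" "r < 2^n" "s < 2^n" "i < n"
  shows "(Xq n i * M) $$ (r, s) = M $$ (fl n i r, s)"
proof -
  have "(Xq n i * M) $$ (r, s) = (\<Sum>k\<in>{0..<2^n}. (if k = fl n i r then M $$ (k, s) else 0))"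
    unfolding mult_entry[OF Xq_carrier assms(1) assms(2,3)]
    by (rule sum.cong[OF refl]) (use assms in \<open>auto simp add: Xq_entry fl_fl\<close>)
  also have "\<dots> = M $$ (fl n i r, s)" using fl_less[OF assms(4,2)] by simp
  finally show ?thesis .
qed


lemma key:
  assumes M: "M \<in> carrier_mat (2^n) (2^n)"
    and hZ: "\<And>i. i < n \<Longrightarrow> M * Zq n i = sgn_bit (\<beta> i) \<cdot>\<^sub>m (Zq n i * M)"
    and hX: "\<And>i. i < n \<Longrightarrow> M * Xq n i = sgn_bit (\<alpha> i) \<cdot>\<^sub>m (Xq n i * M)"
    and U: "dagger M * M = 1\<^sub>m (2^n)"
  shows "\<exists>l. cmod l = 1 \<and> M = l \<cdot>\<^sub>m pauli n \<alpha> \<beta>"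
proof -
  define N where "N = (2::nat)^n"
  define P where "P = pauli n \<alpha> \<beta>"
  have PC: "P \<in> carrier_mat N N" unfolding P_def N_def by (rule pauli_carrier)
  have MC: "M \<in> carrier_mat N N" using M unfolding N_def .
  have Mz: "M $$ (r, s) * zs n i s = sgn_bit (\<beta> i) * (zs n i r * M $$ (r, s))"
    if "r < N" "s < N" "i < n" for r s i
  proof -
    have d: "r < dim_row (Zq n i * M)" "s < dim_col (Zq n i * M)" using that M Zq_carrier[of n i] Xq_carrier[of n i] unfolding N_def by auto
    have "(M * Zq n i) $$ (r, s) = (sgn_bit (\<beta> i) \<cdot>\<^sub>m (Zq n i * M)) $$ (r, s)" using hZ that(3) by simp
    also have "\<dots> = sgn_bit (\<beta> i) * (Zq n i * M) $$ (r, s)" by (rule index_smult_mat(1)[OF d])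
    finally show ?thesis using MZ_entry[OF M, of r s i] ZM_entry[OF M, of r s i] that unfolding N_def by simp
  qed
  have Mrel: "M $$ (r, fl n i s) = sgn_bit (\<alpha> i) * M $$ (fl n i r, s)"
    if "r < N" "s < N" "i < n" for r s i
  proof -
    have d: "r < dim_row (Xq n i * M)" "s < dim_col (Xq n i * M)" using that M Zq_carrier[of n i] Xq_carrier[of n i] unfolding N_def by auto
    have "(M * Xq n i) $$ (r, s) = (sgn_bit (\<alpha> i) \<cdot>\<^sub>m (Xq n i * M)) $$ (r, s)" using hX that(3) by simp
    also have "\<dots> = sgn_bit (\<alpha> i) * (Xq n i * M) $$ (r, s)" by (rule index_smult_mat(1)[OF d])
    finally show ?thesis using MX_entry[OF M, of r s i] XM_entry[OF M, of r s i] that unfolding N_def by simp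
  qed
  have Msupp: "bcond n \<beta> r s" if "r < N" "s < N" "M $$ (r, s) \<noteq> 0" for r s
    unfolding bcond_def
  proof (intro allI impI)
    fix j assume j: "j < n"
    have "zs n j s = sgn_bit (\<beta> j) * zs n j r" using Mz[OF that(1,2) j] that(3) by simp
    then show "(qbit n s j = 1) = ((qbit n r j = 1) \<noteq> \<beta> j)"
      unfolding zs_def sgn_bit_def by (auto split: if_splits)
  qed
  have Psupp: "(P $$ (r, s) \<noteq> 0) = bcond n \<beta> r s" if "r < N" "s < N" for r s
    unfolding P_def using pauli_nz that unfolding N_def by blast
  have Prel: "P $$ (r, fl n i s) = sgn_bit (\<alpha> i) * P $$ (fl n i r, s)"
    if "r < N" "s < N" "i < n" for r s i
    unfolding P_def using pauli_rel that unfolding N_def by blast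
  have bc_uniq: "r = r'" if "bcond n \<beta> r s" "bcond n \<beta> r' s" "r < N" "r' < N" for r r' s
  proof (rule qbit_eq_imp_eq)
    show "r < 2^n" "r' < 2^n" using that unfolding N_def by auto
    fix j assume "j < n"
    then have "(qbit n r j = 1) = (qbit n r' j = 1)" using that(1,2) unfolding bcond_def by blast
    then show "qbit n r j = qbit n r' j" using qbit_le1[of n r j] qbit_le1[of n r' j]
      by (metis le_neq_implies_less less_one)
  qed
  have bc_uniq2: "s = s'" if "bcond n \<beta> r s" "bcond n \<beta> r s'" "s < N" "s' < N" for r s s'
  proof (rule qbit_eq_imp_eq)
    show "s < 2^n" "s' < 2^n" using that unfolding N_def by auto
    fix j assume "j < n"
    then have "(qbit n s j = 1) = (qbit n s' j = 1)" using that(1,2) unfolding bcond_def by blast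
    then show "qbit n s j = qbit n s' j" using qbit_le1[of n s j] qbit_le1[of n s' j]
      by (metis le_neq_implies_less less_one)
  qed
  have q0: "qbit n 0 j = 0" for j unfolding qbit_def by simp
  obtain s0 where s0: "s0 < N" "\<forall>j<n. (qbit n s0 j = 1) = \<beta> j"
    using exists_bits[of n \<beta>] unfolding N_def by blast
  have N0: "0 < N" unfolding N_def by simp
  have bc0: "bcond n \<beta> 0 s0" using s0(2) unfolding bcond_def q0 by simp
  have P0: "P $$ (0, s0) \<noteq> 0" using Psupp[OF N0 s0(1)] bc0 by simp
  define l where "l = M $$ (0, s0) / P $$ (0, s0)"
  have main: "\<forall>s<N. M $$ (r, s) = l * P $$ (r, s)" if "r < N" for r
    using that
  proof (induction r rule: less_induct)
    case (less r)
    show ?case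
    proof (cases "r = 0")
      case True
      show ?thesis
      proof (intro allI impI)
        fix s assume s: "s < N"
        show "M $$ (r, s) = l * P $$ (r, s)"
        proof (cases "bcond n \<beta> 0 s")
          case True
          then have "s = s0" using bc_uniq2[OF _ bc0 s s0(1)] by simp
          then show ?thesis using \<open>r = 0\<close> P0 unfolding l_def by simp
        next
          case False
          then show ?thesis using Msupp[OF N0 s] Psupp[OF N0 s] \<open>r = 0\<close> by auto
        qed
      qed
    next
      case False
      have "\<exists>j<n. qbit n r j = 1"
      proof (rule ccontr)
        assume "\<not> (\<exists>j<n. qbit n r j = 1)"
        then have "\<forall>j<n. qbit n r j = qbit n 0 j" using qbit_le1[of n r] q0
          by (metis le_neq_implies_less less_one)
        then have "r = 0" using qbit_eq_imp_eq[of r n 0] less(2) unfolding N_def by simp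
        then show False using False by simp
      qed
      then obtain j where j: "j < n" "qbit n r j = 1" by blast
      define r' where "r' = fl n j r"
      have r'lt: "r' < r" unfolding r'_def using fl_lt[OF j(2)] .
      have r'N: "r' < N" using r'lt less(2) by simp
      have IH: "\<forall>s<N. M $$ (r', s) = l * P $$ (r', s)" using less(1)[OF r'lt r'N] .
      show ?thesis
      proof (intro allI impI)
        fix s assume s: "s < N"
        define s' where "s' = fl n j s"
        have s'N: "s' < N" unfolding s'_def N_def using fl_less j(1) s unfolding N_def by blast
        have fs: "fl n j s' = s" unfolding s'_def by (rule fl_fl)
        have "M $$ (r, s) = sgn_bit (\<alpha> j) * M $$ (r', s')"
          using Mrel[OF less(2) s'N j(1)] unfolding fs r'_def .
        also have "\<dots> = sgn_bit (\<alpha> j) * (l * P $$ (r', s'))" using IH s'N by simp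
        also have "\<dots> = l * (sgn_bit (\<alpha> j) * P $$ (r', s'))" by simp
        also have "sgn_bit (\<alpha> j) * P $$ (r', s') = P $$ (r, s)"
          using Prel[OF less(2) s'N j(1)] unfolding fs r'_def by simp
        finally show "M $$ (r, s) = l * P $$ (r, s)" .
      qed
    qed
  qed
  have Meq: "M = l \<cdot>\<^sub>m P"
    by (rule eq_matI) (use MC PC main in auto)
  have "(dagger M * M) $$ (s0, s0) = 1" using U s0(1) unfolding N_def by simp
  moreover have "(dagger M * M) $$ (s0, s0) = (\<Sum>k\<in>{0..<N}. cnj (M $$ (k, s0)) * M $$ (k, s0))"
  proof -
    have DC: "dagger M \<in> carrier_mat N N" using MC unfolding dagger_def by auto
    show ?thesis unfolding mult_entry[OF DC MC s0(1) s0(1)]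
      by (rule sum.cong[OF refl]) (use MC s0(1) in \<open>simp add: dagger_def\<close>)
  qed
  moreover have "(\<Sum>k\<in>{0..<N}. cnj (M $$ (k, s0)) * M $$ (k, s0)) = (\<Sum>k\<in>{0}. cnj (M $$ (k, s0)) * M $$ (k, s0))"
  proof (rule sum.mono_neutral_right)
    show "{0} \<subseteq> {0..<N}" using N0 by simp
    show "\<forall>k\<in>{0..<N} - {0}. cnj (M $$ (k, s0)) * M $$ (k, s0) = 0"
    proof
      fix k assume k: "k \<in> {0..<N} - {0}"
      have "M $$ (k, s0) = 0"
      proof (rule ccontr)
        assume "M $$ (k, s0) \<noteq> 0"
        then have "bcond n \<beta> k s0" using Msupp k s0(1) by simp
        then have "k = 0" using bc_uniq[OF _ bc0 _ N0] k by simp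
        then show False using k by simp
      qed
      then show "cnj (M $$ (k, s0)) * M $$ (k, s0) = 0" by simp
    qed
  qed simp
  ultimately have "cnj (M $$ (0, s0)) * M $$ (0, s0) = 1" by simp
  then have "cmod (M $$ (0, s0)) ^ 2 = 1"
  proof -
    have "complex_of_real (cmod (M $$ (0, s0)) ^ 2) = 1"
      using \<open>cnj (M $$ (0, s0)) * M $$ (0, s0) = 1\<close> complex_norm_square[of "M $$ (0, s0)"]
      by (simp only: mult.commute)
    then show ?thesis using of_real_eq_1_iff by blast
  qed
  then have m1: "cmod (M $$ (0, s0)) = 1" using norm_ge_zero[of "M $$ (0, s0)"] by (simp add: power2_eq_1_iff)
  have p1: "cmod (P $$ (0, s0)) = 1" unfolding P_def using pauli_norm[of 0 n s0 \<alpha> \<beta>] P0 s0(1)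
    unfolding P_def N_def by simp
  have "cmod l = 1" unfolding l_def using m1 p1 by (simp add: norm_divide)
  then show ?thesis using Meq unfolding P_def by blast
qed


lemma dagger_carrier: "A \<in> carrier_mat N N \<Longrightarrow> dagger A \<in> carrier_mat N N"
  unfolding dagger_def by auto

lemma conj_carrier: "A \<in> carrier_mat N N \<Longrightarrow> conj_mat A \<in> carrier_mat N N"
  unfolding conj_mat_def by auto

lemma conj_mult: assumes "A \<in> carrier_mat N N" "B \<in> carrier_mat N N"
  shows "conj_mat (A * B) = conj_mat A * conj_mat B"
  by (rule eq_matI) (use assms in \<open>auto simp: conj_mat_def scalar_prod_def\<close>)

lemma conj_dagger: "conj_mat (dagger A) = dagger (conj_mat A)"
  by (rule eq_matI) (auto simp: conj_mat_def dagger_def)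

lemma conj_smult: "conj_mat (k \<cdot>\<^sub>m A) = cnj k \<cdot>\<^sub>m conj_mat A"
  by (rule eq_matI) (auto simp: conj_mat_def)

lemma conj_one: "conj_mat (1\<^sub>m N) = 1\<^sub>m N"
  by (rule eq_matI) (auto simp: conj_mat_def)

lemma dagger_mult: assumes "A \<in> carrier_mat N N" "B \<in> carrier_mat N N"
  shows "dagger (A * B) = dagger B * dagger A"
  by (rule eq_matI) (use assms in \<open>auto simp: dagger_def scalar_prod_def mult.commute\<close>)

lemma dagger_dagger: "dagger (dagger A) = A"
  by (rule eq_matI) (auto simp: dagger_def)

lemma conj_pauli: "conj_mat (pauli n a b) = sgn_bit (dot2 n a b) \<cdot>\<^sub>m pauli n a b"
  by (rule eq_matI) (auto simp: conj_mat_def pauli_cnj[symmetric] pauli_carrier[THEN carrier_matD(1)]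
      pauli_carrier[THEN carrier_matD(2)])

lemma smult_one1: "(1::complex) \<cdot>\<^sub>m A = A"
  by (rule eq_matI) auto

lemma conj_Zq: "conj_mat (Zq n i) = Zq n i"
  unfolding Zq_def conj_pauli by (simp add: dot2_def sgn_bit_def smult_one1)

lemma conj_Xq: "conj_mat (Xq n i) = Xq n i"
  unfolding Xq_def conj_pauli by (simp add: dot2_def sgn_bit_def smult_one1)

lemma cnj_sgn_bit: "cnj (sgn_bit f) = sgn_bit f"
  unfolding sgn_bit_def by simp

lemma twist:
  assumes C: "C \<in> carrier_mat N N" and D: "D \<in> carrier_mat N N" and Q: "Q \<in> carrier_mat N N"
    and CC: "dagger C * C = 1\<^sub>m N" and DD: "dagger D * D = 1\<^sub>m N"
    and h: "D * Q * dagger D = t \<cdot>\<^sub>m (C * Q * dagger C)"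
  shows "(dagger C * D) * Q = t \<cdot>\<^sub>m (Q * (dagger C * D))"
proof -
  have Cd: "dagger C \<in> carrier_mat N N" and Dd: "dagger D \<in> carrier_mat N N"
    using C D by (auto intro: dagger_carrier)
  have "(dagger C * D) * Q = dagger C * (D * Q * dagger D) * D"
    using C D Q Cd Dd DD by (simp add: assoc_mult_mat[of _ N N _ N _ N])
  also have "\<dots> = dagger C * (t \<cdot>\<^sub>m (C * Q * dagger C)) * D" unfolding h ..
  also have "\<dots> = t \<cdot>\<^sub>m ((dagger C * C) * Q * (dagger C * D))"
    using C D Q Cd Dd
    by (simp add: mult_smult_distrib[of _ N N _ N] mult_smult_assoc_mat[of _ N N _ N] assoc_mult_mat[of _ N N _ N _ N])
  also have "\<dots> = t \<cdot>\<^sub>m (Q * (dagger C * D))" unfolding CC using Q by simp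
  finally show ?thesis .
qed


theorem lemma3:
  fixes n :: nat and C :: "complex mat"
    and a b c d :: "nat \<Rightarrow> nat \<Rightarrow> bool" and f h :: "nat \<Rightarrow> bool"
  assumes "clifford n C"
    and "\<And>i. i < n \<Longrightarrow> C * Zq n i * dagger C = sgn_bit (f i) \<cdot>\<^sub>m pauli n (a i) (b i)"
    and "\<And>i. i < n \<Longrightarrow> C * Xq n i * dagger C = sgn_bit (h i) \<cdot>\<^sub>m pauli n (c i) (d i)"
  shows "\<exists>\<theta>::real. conj_mat C =
           exp (\<i> * complex_of_real \<theta>) \<cdot>\<^sub>m (C * pauli n (\<lambda>i. dot2 n (c i) (d i)) (\<lambda>i. dot2 n (a i) (b i)))"
proof -
  define N where "N = (2::nat) ^ n"
  define \<alpha> where "\<alpha> = (\<lambda>i. dot2 n (c i) (d i))"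
  define \<beta> where "\<beta> = (\<lambda>i. dot2 n (a i) (b i))"
  define D where "D = conj_mat C"
  have C: "C \<in> carrier_mat N N" and CCd: "C * dagger C = 1\<^sub>m N"
    using assms(1) unfolding clifford_def unitary_mat_def N_def by auto
  have Cd: "dagger C \<in> carrier_mat N N" using C by (rule dagger_carrier)
  have CdC: "dagger C * C = 1\<^sub>m N" by (rule mat_mult_left_right_inverse[OF C Cd CCd])
  have D: "D \<in> carrier_mat N N" unfolding D_def using C by (rule conj_carrier)
  have Dd: "dagger D \<in> carrier_mat N N" using D by (rule dagger_carrier)
  have DdD: "dagger D * D = 1\<^sub>m N"
  proof -
    have "conj_mat (dagger C * C) = 1\<^sub>m N" unfolding CdC conj_one ..
    then show ?thesis unfolding conj_mult[OF Cd C] conj_dagger D_def .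
  qed
  have conj3: "conj_mat (C * Q * dagger C) = D * Q * dagger D"
    if "Q \<in> carrier_mat N N" "conj_mat Q = Q" for Q
  proof -
    have "C * Q \<in> carrier_mat N N" using that C by simp
    then have "conj_mat (C * Q * dagger C) = conj_mat (C * Q) * conj_mat (dagger C)"
      using Cd by (rule conj_mult)
    also have "conj_mat (C * Q) = D * Q" unfolding D_def using conj_mult[OF C that(1)] that(2) by simp
    finally show ?thesis unfolding D_def conj_dagger .
  qed
  have ssm: "x \<cdot>\<^sub>m (y \<cdot>\<^sub>m A) = y \<cdot>\<^sub>m (x \<cdot>\<^sub>m A)" for x y :: complex and A
    by (rule eq_matI) auto
  define M where "M = dagger C * D"
  have MC: "M \<in> carrier_mat N N" unfolding M_def using Cd D by simp
  have hZ: "M * Zq n i = sgn_bit (\<beta> i) \<cdot>\<^sub>m (Zq n i * M)" if i: "i < n" for i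
  proof -
    have Z: "Zq n i \<in> carrier_mat N N" unfolding N_def by (rule Zq_carrier)
    have "D * Zq n i * dagger D = conj_mat (C * Zq n i * dagger C)"
      using conj3[OF Z conj_Zq] ..
    also have "\<dots> = sgn_bit (\<beta> i) \<cdot>\<^sub>m (C * Zq n i * dagger C)"
      unfolding assms(2)[OF i] conj_smult conj_pauli cnj_sgn_bit \<beta>_def by (rule ssm)
    finally show ?thesis unfolding M_def by (rule twist[OF C D Z CdC DdD])
  qed
  have hX: "M * Xq n i = sgn_bit (\<alpha> i) \<cdot>\<^sub>m (Xq n i * M)" if i: "i < n" for i
  proof -
    have X: "Xq n i \<in> carrier_mat N N" unfolding N_def by (rule Xq_carrier)
    have "D * Xq n i * dagger D = conj_mat (C * Xq n i * dagger C)"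
      using conj3[OF X conj_Xq] ..
    also have "\<dots> = sgn_bit (\<alpha> i) \<cdot>\<^sub>m (C * Xq n i * dagger C)"
      unfolding assms(3)[OF i] conj_smult conj_pauli cnj_sgn_bit \<alpha>_def by (rule ssm)
    finally show ?thesis unfolding M_def by (rule twist[OF C D X CdC DdD])
  qed
  have U: "dagger M * M = 1\<^sub>m N"
  proof -
    have "dagger M * M = dagger D * C * (dagger C * D)"
      unfolding M_def dagger_mult[OF Cd D] dagger_dagger ..
    also have "\<dots> = dagger D * (C * dagger C) * D"
      using C Cd D Dd by (simp add: assoc_mult_mat[of _ N N _ N _ N])
    also have "\<dots> = 1\<^sub>m N" unfolding CCd using Dd DdD by simp
    finally show ?thesis .
  qed
  obtain l where l: "cmod l = 1" "M = l \<cdot>\<^sub>m pauli n \<alpha> \<beta>"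
    using key[of M n \<beta> \<alpha>] MC hZ hX U unfolding N_def by blast
  have P: "pauli n \<alpha> \<beta> \<in> carrier_mat N N" unfolding N_def by (rule pauli_carrier)
  have "D = C * M"
  proof -
    have "C * M = (C * dagger C) * D" unfolding M_def using C Cd D by simp
    then show ?thesis unfolding CCd using D by simp
  qed
  also have "\<dots> = l \<cdot>\<^sub>m (C * pauli n \<alpha> \<beta>)" unfolding l(2) by (rule mult_smult_distrib[OF C P])
  finally have DD: "conj_mat C = l \<cdot>\<^sub>m (C * pauli n \<alpha> \<beta>)" unfolding D_def .
  have "l \<noteq> 0" using l(1) by auto
  then have "exp (\<i> * complex_of_real (Arg l)) = l"
    using cis_Arg[of l] l(1) by (simp add: cis_conv_exp sgn_eq)
  then show ?thesis using DD unfolding \<alpha>_def \<beta>_def by metis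
qed

end
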